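(* Assume the thermal noise in the data phase is zero, $\mathbf N_D=\mathbf 0$, so that $\mathbf Y_D=\mathbf H\mathbf S_D+\mathbf J\mathbf W_D$. If the jammer is not eclipsed (in the sense of eclipsing with perfect CSI defined in the context), then the optimization problem $$\min_{\tilde{\mathbf S}_D\in\mathcal S^{U\times D},\ \tilde{\mathbf P}\in\mathscr G_{B-I}(\mathbb C^B)}\ \big\|\tilde{\mathbf P}(\mathbf Y_D-\mathbf H\tilde{\mathbf S}_D)\big\|_F^2$$ has the unique minimizer $(\hat{\mathbf P},\hat{\mathbf S}_D)=(\mathbf I_B-\mathbf J\mathbf J^\dagger,\ \mathbf S_D)$.
   Context: Let $B,U,I,D$ be positive integers with $B\ge U+I$. Let $\mathcal S=\{(\pm1\pm i)/\sqrt2\}\subset\mathbb C$ (QPSK). Let $\mathbf H\in\mathbb C^{B\times U}$ and $\mathbf J\in\mathbb C^{B\times I}$ be such that the concatenation $[\mathbf H,\mathbf J]\in\mathbb C^{B\times(U+I)}$ has full column rank $U+I$. Let $\mathbf S_D\in\mathcal S^{U\times D}$ (data matrix), $\mathbf W_D\in\mathbb C^{I\times D}$ (jammer transmit matrix), $\mathbf N_D\in\mathbb C^{B\times D}$, and $\mathbf Y_D=\mathbf H\mathbf S_D+\mathbf J\mathbf W_D+\mathbf N_D$. $\mathbf A^\dagger$ is the Moore–Penrose pseudoinverse. $\mathscr G_{B-I}(\mathbb C^B)$ denotes the set of $B\times B$ orthogonal projection matrices onto $(B-I)$-dimensional subspaces of $\mathbb C^B$, i.e. matrices $\mathbf I_B-\mathbf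 Q\mathbf Q^{\mathrm H}$ with $\mathbf Q\in\mathbb C^{B\times I}$ having orthonormal columns. Eclipsing with perfect CSI: the jammer is eclipsed if there exists $\tilde{\mathbf S}_D\in\mathcal S^{U\times D}\setminus\{\mathbf S_D\}$ such that the vertically stacked matrix $\begin{bmatrix}\mathbf S_D-\tilde{\mathbf S}_D\\ \mathbf W_D\end{bmatrix}\in\mathbb C^{(U+I)\times D}$ has rank at most $I$. *)

theory Defs
  imports "HOL-Analysis.Analysis"
begin

definition qpsk :: "complex set" where
  "qpsk = {x. \<exists>a b::real. a \<in> {-1, 1} \<and> b \<in> {-1, 1} \<and>
              x = (complex_of_real a + \<i> * complex_of_real b) / complex_of_real (sqrt 2)}"

definition mat_over :: "'a set \<Rightarrow> ('a^'n^'m) set" where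
  "mat_over A = {M. \<forall>i j. M $ i $ j \<in> A}"

definition ctrans :: "complex^'n^'m \<Rightarrow> complex^'m^'n" where
  "ctrans A = (\<chi> i j. cnj (A $ j $ i))"

definition pinv :: "complex^'n^'m \<Rightarrow> complex^'m^'n" where
  "pinv A = (THE X. A ** X ** A = A \<and> X ** A ** X = X \<and>
                    ctrans (A ** X) = A ** X \<and> ctrans (X ** A) = X ** A)"

definition frob_sq :: "complex^'n^'m \<Rightarrow> real" where
  "frob_sq A = (\<Sum>i\<in>UNIV. \<Sum>j\<in>UNIV. (cmod (A $ i $ j))\<^sup>2)"

definition hcat :: "'a^'n^'m \<Rightarrow> 'a^'k^'m \<Rightarrow> 'a^('n + 'k)^'m" where
  "hcat A C = (\<chi> r c. case c of Inl j \<Rightarrow> A $ r $ j | Inr j \<Rightarrow> C $ r $ j)"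

definition vcat :: "'a^'n^'m \<Rightarrow> 'a^'n^'k \<Rightarrow> 'a^'n^('m + 'k)" where
  "vcat A C = (\<chi> r c. case r of Inl i \<Rightarrow> A $ i $ c | Inr i \<Rightarrow> C $ i $ c)"

text \<open>G_{B-I}(C^B): projections I_B - Q Q^H with Q in C^{B x I} having orthonormal
  columns; the number of columns I is given by the type 'i.\<close>
definition grass_proj :: "'i::finite itself \<Rightarrow> (complex^'b^'b) set" where
  "grass_proj _ = {P. \<exists>Q :: complex^'i^'b. ctrans Q ** Q = mat 1 \<and> P = mat 1 - Q ** ctrans Q}"

definition eclipsed :: "complex^'d^'u \<Rightarrow> complex^'d^'i \<Rightarrow> bool" where
  "eclipsed S W = (\<exists>S' \<in> mat_over qpsk. S' \<noteq> S \<and> rank (vcat (S - S') W) \<le> CARD('i))"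

end

theory Submission
  imports Defs
begin


lemma ctrans_mult: "ctrans (A ** B) = ctrans B ** ctrans (A :: complex^'n^'m)"
  by (simp add: ctrans_def matrix_matrix_mult_def vec_eq_iff mult.commute)

lemma ctrans_ctrans[simp]: "ctrans (ctrans A) = A"
  by (simp add: ctrans_def vec_eq_iff)

lemma ctrans_mat1[simp]: "ctrans (mat 1 :: complex^'n^'n) = mat 1"
  by (simp add: ctrans_def vec_eq_iff mat_def)

lemma ctrans_diff: "ctrans (A - B) = ctrans A - ctrans (B :: complex^'n^'m)"
  by (simp add: ctrans_def vec_eq_iff)

lemma matrix_diff_ldistrib: "(A :: 'a::ring_1^'n^'m) ** (B - C) = A ** B - A ** C"
  by (simp add: matrix_matrix_mult_def vec_eq_iff algebra_simps sum_subtractf)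

lemma matrix_diff_rdistrib: "((B :: 'a::ring_1^'n^'m) - C) ** A = B ** A - C ** A"
  by (simp add: matrix_matrix_mult_def vec_eq_iff algebra_simps sum_subtractf)

lemma matrix_add_rdistrib': "((B :: 'a::ring_1^'n^'m) + C) ** A = B ** A + C ** A"
  by (simp add: matrix_matrix_mult_def vec_eq_iff algebra_simps sum.distrib)

lemma matrix_mul_0_left[simp]: "(0 :: 'a::ring_1^'n^'m) ** A = 0"
  by (simp add: matrix_matrix_mult_def vec_eq_iff)

lemma matrix_mul_0_right[simp]: "(A :: 'a::ring_1^'n^'m) ** 0 = 0"
  by (simp add: matrix_matrix_mult_def vec_eq_iff)

lemma pinv_unique:
  fixes A :: "complex^'n^'m"
  assumes X: "A ** X ** A = A" "X ** A ** X = X" "ctrans (A ** X) = A ** X" "ctrans (X ** A) = X ** A"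
  and Y: "A ** Y ** A = A" "Y ** A ** Y = Y" "ctrans (A ** Y) = A ** Y" "ctrans (Y ** A) = Y ** A"
  shows "X = Y"
proof -
  have "X = X ** (A ** X)" using X(2) by (simp add: matrix_mul_assoc)
  also have "\<dots> = X ** ctrans (A ** X)" using X(3) by simp
  also have "\<dots> = X ** ctrans X ** ctrans A" by (simp add: ctrans_mult matrix_mul_assoc)
  also have "ctrans A = ctrans (A ** Y ** A)" using Y(1) by simp
  also have "\<dots> = ctrans A ** ctrans (A ** Y)" by (simp add: ctrans_mult matrix_mul_assoc)
  also have "X ** ctrans X ** (ctrans A ** ctrans (A ** Y)) = X ** ctrans (A ** X) ** ctrans (A ** Y)"
    by (simp add: ctrans_mult matrix_mul_assoc)
  also have "\<dots> = X ** A ** Y" using X(3) Y(3) X(2)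
    by (metis matrix_mul_assoc)
  finally have 1: "X = X ** A ** Y" .
  have "Y = (Y ** A) ** Y" using Y(2) by simp
  also have "\<dots> = ctrans (Y ** A) ** Y" using Y(4) by simp
  also have "\<dots> = ctrans A ** ctrans Y ** Y" by (simp add: ctrans_mult)
  also have "ctrans A = ctrans (A ** X ** A)" using X(1) by simp
  also have "\<dots> = ctrans (X ** A) ** ctrans A" by (simp add: ctrans_mult matrix_mul_assoc)
  also have "ctrans (X ** A) ** ctrans A ** ctrans Y ** Y = ctrans (X ** A) ** ctrans (Y ** A) ** Y"
    by (simp add: ctrans_mult matrix_mul_assoc)
  also have "\<dots> = X ** A ** Y" using X(4) Y(4) Y(2)
    by (metis matrix_mul_assoc)
  finally show ?thesis using 1 by simp
qed


definition hip :: "complex^'b \<Rightarrow> complex^'b \<Rightarrow> complex" where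
  "hip x y = (\<Sum>k\<in>UNIV. cnj (x$k) * y$k)"

lemma hip_add_right: "hip x (y + z) = hip x y + hip x z"
  by (simp add: hip_def algebra_simps sum.distrib)
lemma hip_diff_right: "hip x (y - z) = hip x y - hip x z"
  by (simp add: hip_def algebra_simps sum_subtractf)
lemma hip_scale_right: "hip x (c *s y) = c * hip x y"
  by (simp add: hip_def sum_distrib_left algebra_simps)
lemma hip_scale_left: "hip (c *s x) y = cnj c * hip x y"
  by (simp add: hip_def sum_distrib_left algebra_simps)
lemma hip_sum_right: "hip x (\<Sum>t\<in>T. f t) = (\<Sum>t\<in>T. hip x (f t))"
  by (simp add: hip_def sum_component sum_distrib_left; subst sum.swap; simp)
lemma hip_zero_right[simp]: "hip x 0 = 0"
  by (simp add: hip_def)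
lemma hip_cnj: "hip y x = cnj (hip x y)"
  by (simp add: hip_def mult.commute)
lemma hip_self: "hip x x = complex_of_real (\<Sum>k\<in>UNIV. (cmod (x$k))\<^sup>2)"
proof -
  have "\<And>k. cnj (x$k) * x$k = complex_of_real ((cmod (x$k))\<^sup>2)"
    by (metis complex_norm_square mult.commute of_real_power)
  then show ?thesis unfolding hip_def of_real_sum by simp
qed
lemma hip_self_eq0: "hip x x = 0 \<longleftrightarrow> x = 0"
proof
  assume "hip x x = 0"
  then have "complex_of_real (\<Sum>k\<in>UNIV. (cmod (x$k))\<^sup>2) = 0" by (simp only: hip_self)
  then have "(\<Sum>k\<in>UNIV. (cmod (x$k))\<^sup>2) = 0" by (simp only: of_real_eq_0_iff)
  then have "\<forall>k\<in>UNIV. (cmod (x$k))\<^sup>2 = 0" by (subst (asm) sum_nonneg_eq_0_iff) auto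
  then show "x = 0" by (simp add: vec_eq_iff)
qed simp

definition orthonormal :: "(complex^'b) set \<Rightarrow> bool" where
  "orthonormal T \<longleftrightarrow> finite T \<and> (\<forall>t\<in>T. hip t t = 1) \<and> (\<forall>s\<in>T. \<forall>t\<in>T. s \<noteq> t \<longrightarrow> hip s t = 0)"

definition proj :: "(complex^'b) set \<Rightarrow> complex^'b \<Rightarrow> complex^'b" where
  "proj T v = (\<Sum>t\<in>T. hip t v *s t)"

lemma hip_proj:
  assumes "orthonormal T" "s \<in> T"
  shows "hip s (proj T v) = hip s v"
proof -
  have "hip s (proj T v) = (\<Sum>t\<in>T. hip t v * hip s t)"
    by (simp add: proj_def hip_sum_right hip_scale_right)
  also have "\<dots> = (\<Sum>t\<in>T. if t = s then hip s v else 0)"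
    using assms unfolding orthonormal_def by (intro sum.cong) auto
  also have "\<dots> = hip s v" using assms unfolding orthonormal_def by simp
  finally show ?thesis .
qed

lemma proj_add: "proj T (x + y) = proj T x + proj T y"
  by (simp add: proj_def hip_add_right vector_sadd_rdistrib sum.distrib)
lemma proj_scale: "proj T (c *s x) = c *s proj T x"
  by (simp add: proj_def hip_scale_right vec.scale_sum_right vector_smult_assoc)

lemma proj_zero: "proj T 0 = 0"
  by (simp add: proj_def)

lemma proj_span:
  assumes "orthonormal T" "x \<in> vec.span T"
  shows "proj T x = x"
  using assms(2)
proof (induction rule: vec.span_induct)
  case base
  show ?case
    unfolding vec.subspace_def
    by (simp add: proj_add proj_scale proj_zero)
next
  case (step t)
  have "proj T t = (\<Sum>s\<in>T. if s = t then t else 0)"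
    unfolding proj_def using assms(1) step unfolding orthonormal_def by (intro sum.cong) auto
  also have "\<dots> = t" using step assms(1) unfolding orthonormal_def by simp
  finally show ?case by simp
qed

lemma gs_step:
  assumes T: "orthonormal T" and v: "v \<notin> vec.span T"
  shows "\<exists>u. u \<notin> T \<and> orthonormal (insert u T) \<and> v \<in> vec.span (insert u T)"
proof -
  define w where "w = v - proj T v"
  have pT: "proj T v \<in> vec.span T"
    unfolding proj_def by (intro vec.span_sum vec.span_scale vec.span_base)
  have w0: "w \<noteq> 0" using v pT unfolding w_def by auto
  have ws: "hip s w = 0" if "s \<in> T" for s
    using hip_proj[OF T that] by (simp add: w_def hip_diff_right)
  define r where "r = (\<Sum>k\<in>UNIV. (cmod (w$k))\<^sup>2)"
  have r0: "r > 0"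
  proof -
    have "r \<ge> 0" unfolding r_def by (intro sum_nonneg) auto
    moreover have "r \<noteq> 0"
    proof
      assume "r = 0"
      then have "hip w w = 0" by (simp only: hip_self r_def of_real_0)
      then show False using w0 hip_self_eq0 by blast
    qed
    ultimately show ?thesis by simp
  qed
  define n where "n = sqrt r"
  have n0: "n > 0" using r0 by (simp add: n_def)
  define u where "u = complex_of_real (1 / n) *s w"
  have uu: "hip u u = 1"
  proof -
    have "hip u u = complex_of_real (1/n) * complex_of_real (1/n) * hip w w"
      by (simp add: u_def hip_scale_left hip_scale_right)
    also have "\<dots> = complex_of_real ((1/n) * (1/n) * r)" by (simp only: hip_self r_def of_real_mult)
    also have "(1/n) * (1/n) * r = 1" using n0 r0 by (simp add: n_def field_simps)
    finally show ?thesis by simp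
  qed
  have us: "hip s u = 0" if "s \<in> T" for s
    using ws[OF that] by (simp add: u_def hip_scale_right)
  have su: "hip u s = 0" if "s \<in> T" for s
    using us[OF that] hip_cnj[of u s] by simp
  have uT: "u \<notin> T" using us uu by force
  have on: "orthonormal (insert u T)"
    using T uu us su unfolding orthonormal_def by auto
  have "v = complex_of_real n *s u + proj T v"
    using n0 by (simp add: u_def w_def vector_smult_assoc)
  moreover have "complex_of_real n *s u \<in> vec.span (insert u T)"
    by (intro vec.span_scale vec.span_base) simp
  moreover have "proj T v \<in> vec.span (insert u T)"
    using pT vec.span_mono[of T "insert u T"] by auto
  ultimately have "v \<in> vec.span (insert u T)" by (metis vec.span_add)
  with uT on show ?thesis by blast
qed

lemma gs_set:
  assumes "finite V"
  shows "\<exists>T. orthonormal T \<and> card T \<le> card V \<and> V \<subseteq> vec.span (T :: (complex^'b) set)"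
  using assms
proof (induction rule: finite_induct)
  case empty
  show ?case by (rule exI[of _ "{}"]) (simp add: orthonormal_def)
next
  case (insert v V)
  then obtain T where T: "orthonormal T" "card T \<le> card V" "V \<subseteq> vec.span T" by blast
  show ?case
  proof (cases "v \<in> vec.span T")
    case True
    then show ?thesis using T insert by (intro exI[of _ T]) auto
  next
    case False
    from gs_step[OF T(1) False] obtain u where u: "u \<notin> T" "orthonormal (insert u T)" "v \<in> vec.span (insert u T)" by blast
    have "card (insert u T) \<le> card (insert v V)"
      using u T insert unfolding orthonormal_def by simp
    moreover have "insert v V \<subseteq> vec.span (insert u T)"
      using u T vec.span_mono[of T "insert u T"] by auto
    ultimately show ?thesis using u by blast
  qed
qed

lemma gs_extend:
  assumes "orthonormal (T :: (complex^'b) set)" "card T \<le> n" "n \<le> CARD('b)"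
  shows "\<exists>T'. T \<subseteq> T' \<and> orthonormal T' \<and> card T' = n"
  using assms
proof (induction "n - card T" arbitrary: T)
  case 0
  then show ?case by (intro exI[of _ T]) auto
next
  case (Suc k)
  have fT: "finite T" using Suc.prems unfolding orthonormal_def by simp
  have "vec.dim (vec.span T) \<le> card T" using vec.dim_le_card'[OF fT] by simp
  have "vec.span T \<noteq> UNIV"
  proof
    assume "vec.span T = UNIV"
    then have "vec.dim (UNIV :: (complex^'b) set) \<le> card T"
      using \<open>vec.dim (vec.span T) \<le> card T\<close> by simp
    moreover have "card T < n" using Suc.hyps by simp
    ultimately show False using Suc.prems(3) vec_dim_card[where 'a=complex and 'n='b] by simp
  qed
  then obtain v where v: "v \<notin> vec.span T" by blast
  from gs_step[OF Suc.prems(1) v] obtain u where u: "u \<notin> T" "orthonormal (insert u T)" by blast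
  have "k = n - card (insert u T)" using Suc.hyps u fT by simp
  moreover have "card (insert u T) \<le> n" using Suc.hyps u fT by simp
  ultimately obtain T' where
    "insert u T \<subseteq> T'" "orthonormal T'" "card T' = n" using Suc.hyps(1)[of "insert u T"] u(2) Suc.prems(3) by blast
  then show ?case by blast
qed


lemma exists_Q:
  fixes J :: "complex^'i::finite^'b::finite"
  assumes "CARD('i) \<le> CARD('b)"
  shows "\<exists>Q::complex^'i^'b. ctrans Q ** Q = mat 1 \<and> J = Q ** (ctrans Q ** J)"
proof -
  define V where "V = range (\<lambda>i. column i J)"
  have fV: "finite V" unfolding V_def by simp
  have cV: "card V \<le> CARD('i)" unfolding V_def by (rule card_image_le) simp
  obtain T where T: "orthonormal T" "card T \<le> card V" "V \<subseteq> vec.span T"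
    using gs_set[OF fV] by blast
  obtain T' where T': "T \<subseteq> T'" "orthonormal T'" "card T' = CARD('i)"
    using gs_extend[OF T(1), of "CARD('i)"] T(2) cV assms by auto
  have VT': "V \<subseteq> vec.span T'" using T(3) T'(1) vec.span_mono by blast
  have fT': "finite T'" using T'(2) unfolding orthonormal_def by simp
  obtain f where f: "bij_betw f (UNIV::'i set) T'"
    using finite_same_card_bij[of "UNIV::'i set" T'] fT' T'(3) by auto
  have fin: "f i \<in> T'" for i using f by (auto simp: bij_betw_def)
  have finj: "f i = f j \<Longrightarrow> i = j" for i j using f by (auto simp: bij_betw_def inj_on_def)
  define Q where "Q = (\<chi> r i. f i $ r :: complex^'i^'b)"
  have 1: "ctrans Q ** Q = mat 1"
  proof -
    have "(ctrans Q ** Q) $ i $ j = hip (f i) (f j)" for i j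
      by (simp add: Q_def ctrans_def matrix_matrix_mult_def hip_def)
    moreover have "hip (f i) (f j) = mat 1 $ i $ j" for i j
      using T'(2) fin finj unfolding orthonormal_def mat_def by (cases "i = j") (auto, metis)
    ultimately show ?thesis by (simp add: vec_eq_iff)
  qed
  have 2: "J = Q ** (ctrans Q ** J)"
  proof -
    have "J $ r $ c = (Q ** (ctrans Q ** J)) $ r $ c" for r c
    proof -
      have cs: "column c J \<in> vec.span T'" using VT' unfolding V_def by auto
      have "J $ r $ c = proj T' (column c J) $ r"
        using proj_span[OF T'(2) cs] by (simp add: column_def)
      also have "\<dots> = (\<Sum>t\<in>T'. hip t (column c J) * t $ r)"
        by (simp add: proj_def sum_component)
      also have "\<dots> = (\<Sum>i\<in>UNIV. hip (f i) (column c J) * f i $ r)"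
        by (rule sum.reindex_bij_betw[OF f, symmetric])
      also have "\<dots> = (Q ** (ctrans Q ** J)) $ r $ c"
        by (simp add: Q_def ctrans_def matrix_matrix_mult_def hip_def column_def
            sum_distrib_left sum_distrib_right mult.commute mult.left_commute)
      finally show ?thesis .
    qed
    then show ?thesis by (simp add: vec_eq_iff)
  qed
  show ?thesis using 1 2 by blast
qed


lemma hcat_vcat: "hcat H J ** vcat X Y = H ** X + J ** (Y :: 'a::semiring_1^'d^'k)"
  by (simp add: hcat_def vcat_def matrix_matrix_mult_def vec_eq_iff
      flip: UNIV_Plus_UNIV add: sum.Plus)

lemma row_mult: "row r (X ** Y) = (\<Sum>k\<in>UNIV. X$r$k *s row k (Y :: 'a::field^'d^'k))"
  by (simp add: row_def matrix_matrix_mult_def vec_eq_iff sum_component mult.commute)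

lemma rank_factor:
  fixes X :: "'a::field^'k::finite^'m::finite" and Y :: "'a^'d::finite^'k"
  shows "rank (X ** Y) \<le> CARD('k)"
proof -
  have sub: "rows (X ** Y) \<subseteq> vec.span (rows Y)"
  proof
    fix v assume "v \<in> rows (X ** Y)"
    then obtain r where v: "v = row r (X ** Y)" by (auto simp: rows_def)
    show "v \<in> vec.span (rows Y)"
      unfolding v row_mult
      by (intro vec.span_sum vec.span_scale vec.span_base) (auto simp: rows_def)
  qed
  have rY: "rows Y = range (\<lambda>i. row i Y)" by (auto simp: rows_def)
  have fin: "finite (rows Y)" unfolding rY by simp
  have "rank (X ** Y) \<le> card (rows Y)"
    unfolding row_rank_def_gen by (rule vec.dim_le_card[OF sub fin])
  also have "card (rows Y) \<le> CARD('k)"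
    unfolding rY by (simp add: card_image_le)
  finally show ?thesis .
qed

lemma frob_sq_nonneg: "frob_sq A \<ge> 0"
  unfolding frob_sq_def by (intro sum_nonneg) auto

lemma frob_sq_zero[simp]: "frob_sq 0 = 0"
  unfolding frob_sq_def by simp

lemma frob_sq_eq0: "frob_sq A = 0 \<Longrightarrow> A = 0"
proof -
  assume "frob_sq A = 0"
  then have "\<forall>i\<in>UNIV. (\<Sum>j\<in>UNIV. (cmod (A $ i $ j))\<^sup>2) = 0"
    unfolding frob_sq_def by (subst (asm) sum_nonneg_eq_0_iff) (auto intro: sum_nonneg)
  then have "\<forall>i j. (cmod (A $ i $ j))\<^sup>2 = 0"
    by (metis (no_types, lifting) UNIV_I finite sum_nonneg_eq_0_iff zero_le_power2)
  then show "A = 0" by (simp add: vec_eq_iff)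
qed

lemma left_inv:
  fixes A :: "'a::field^'n::finite^'m::finite"
  assumes "rank A = CARD('n)"
  shows "\<exists>L. L ** A = mat 1"
proof -
  have "vec.dim (rows A) = vec.dimension TYPE('a) TYPE('n)" 
    using assms by (simp add: row_rank_def_gen vec.dimension_def card_cart_basis)
  then have "vec.span (rows A) = UNIV" using vec.dim_eq_full by blast
  then show ?thesis using matrix_left_invertible_span_rows_gen by blast
qed

lemma qpsk_neg: "x \<in> qpsk \<Longrightarrow> -x \<in> qpsk"
  unfolding qpsk_def
proof clarify
  fix a b :: real
  assume "a \<in> {-1,1}" "b \<in> {-1,1}"
  then show "\<exists>a' b'. a' \<in> {-1,1} \<and> b' \<in> {-1,1} \<and>
     - ((complex_of_real a + \<i> * complex_of_real b) / complex_of_real (sqrt 2)) =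
       (complex_of_real a' + \<i> * complex_of_real b') / complex_of_real (sqrt 2)"
    by (intro exI[of _ "-a"] exI[of _ "-b"]) (auto simp: field_simps)
qed

lemma qpsk_nz: "x \<in> qpsk \<Longrightarrow> x \<noteq> 0"
  unfolding qpsk_def
proof clarify
  fix a b :: real
  assume a: "a \<in> {-1,1}" and "(complex_of_real a + \<i> * complex_of_real b) / complex_of_real (sqrt 2) = 0"
  then have "complex_of_real a + \<i> * complex_of_real b = 0" by simp
  then have "Re (complex_of_real a + \<i> * complex_of_real b) = 0" by simp
  then have "a = 0" by simp
  with a show False by simp
qed

lemma ecl:
  fixes S :: "complex^'d::finite^'u::finite" and W :: "complex^'d^'i::finite"
  assumes S: "S \<in> mat_over qpsk" and z0: "z $ i0 \<noteq> 0"
    and zW: "\<And>d. (\<Sum>i\<in>UNIV. z$i * W$i$d) = 0"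
  shows "eclipsed S W"
proof -
  obtain u0 :: 'u where True by blast
  obtain d0 :: 'd where True by blast
  define S'' where "S'' = (\<chi> u d. if u = u0 \<and> d = d0 then - S$u$d else S$u$d)"
  have Sq: "S$u$d \<in> qpsk" for u d using S by (simp add: mat_over_def)
  have S''q: "S'' \<in> mat_over qpsk" using Sq qpsk_neg by (simp add: mat_over_def S''_def)
  have "S'' $ u0 $ d0 \<noteq> S $ u0 $ d0"
    using qpsk_nz[OF Sq[of u0 d0]] by (simp add: S''_def)
  then have neq: "S'' \<noteq> S" by auto
  define E where "E = S - S''"
  have E: "E $ u $ d = (if u = u0 \<and> d = d0 then 2 * S$u$d else 0)" for u d
    by (simp add: E_def S''_def)
  define Y0 where "Y0 = (\<chi> i d. if i = i0 then E$u0$d else W$i$d)"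
  define X0 :: "complex^'i^('u+'i)" where "X0 = (\<chi> r i. case r of Inl u \<Rightarrow> (if u = u0 \<and> i = i0 then 1 else 0)
       | Inr k \<Rightarrow> (if k = i0 then (if i = i0 then 0 else - z$i / z$i0) else (if i = k then 1 else 0)))"
  have fact: "vcat E W = X0 ** Y0"
  proof -
    have "vcat E W $ r $ d = (X0 ** Y0) $ r $ d" for r d
    proof (cases r)
      case (Inl u)
      have "(X0 ** Y0) $ r $ d = (\<Sum>i\<in>UNIV. if i = i0 then (if u = u0 then Y0$i$d else 0) else 0)"
        unfolding matrix_matrix_mult_def vec_lambda_beta using Inl by (intro sum.cong) (auto simp: X0_def)
      also have "\<dots> = (if u = u0 then E$u0$d else 0)" by (simp add: Y0_def)
      also have "\<dots> = vcat E W $ r $ d" using Inl by (simp add: vcat_def E)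
      finally show ?thesis by simp
    next
      case (Inr k)
      show ?thesis
      proof (cases "k = i0")
        case False
        have "(X0 ** Y0) $ r $ d = (\<Sum>i\<in>UNIV. if i = k then Y0$i$d else 0)"
          unfolding matrix_matrix_mult_def vec_lambda_beta using Inr False by (intro sum.cong) (auto simp: X0_def)
        also have "\<dots> = W$k$d" using False by (simp add: Y0_def)
        finally show ?thesis using Inr by (simp add: vcat_def)
      next
        case True
        define f where "f i = - z$i / z$i0 * W$i$d" for i
        have "(X0 ** Y0) $ r $ d = (\<Sum>i\<in>UNIV. if i = i0 then 0 else f i)"
          unfolding matrix_matrix_mult_def vec_lambda_beta using Inr True by (intro sum.cong) (auto simp: X0_def Y0_def f_def)
        also have "\<dots> = (\<Sum>i\<in>UNIV. f i) - f i0"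
        proof -
          have "(\<Sum>i\<in>UNIV. f i) = (\<Sum>i\<in>UNIV. (if i = i0 then f i0 else 0) + (if i = i0 then 0 else f i))"
            by (intro sum.cong) auto
          also have "\<dots> = f i0 + (\<Sum>i\<in>UNIV. if i = i0 then 0 else f i)"
            by (simp add: sum.distrib)
          finally show ?thesis by simp
        qed
        also have "(\<Sum>i\<in>UNIV. f i) = - (1 / z$i0) * (\<Sum>i\<in>UNIV. z$i * W$i$d)"
          by (simp add: f_def sum_distrib_left sum_negf)
        also have "\<dots> = 0" using zW by simp
        also have "0 - f i0 = W$i0$d" using z0 by (simp add: f_def)
        finally show ?thesis using Inr True by (simp add: vcat_def)
      qed
    qed
    then show ?thesis by (simp add: vec_eq_iff)
  qed
  have "rank (vcat (S - S'') W) \<le> CARD('i)"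
    using rank_factor[of X0 Y0] fact by (simp add: E_def)
  then show ?thesis unfolding eclipsed_def using S''q neq by blast
qed


theorem theorem1:
  fixes H :: "complex^'u::finite^'b::finite"
    and J :: "complex^'i::finite^'b"
    and S :: "complex^'d::finite^'u"
    and W :: "complex^'d^'i"
    and Y :: "complex^'d^'b"
  assumes "CARD('b) \<ge> CARD('u) + CARD('i)"
    and "rank (hcat H J) = CARD('u) + CARD('i)"
    and "S \<in> mat_over qpsk"
    and "Y = H ** S + J ** W"
    and "\<not> eclipsed S W"
  shows "(mat 1 - J ** pinv J) \<in> grass_proj TYPE('i) \<and>
         (\<forall>S' \<in> mat_over qpsk. \<forall>P \<in> grass_proj TYPE('i).
            (P, S') \<noteq> (mat 1 - J ** pinv J, S) \<longrightarrow>
            frob_sq ((mat 1 - J ** pinv J) ** (Y - H ** S)) < frob_sq (P ** (Y - H ** S')))"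
proof -
  obtain L where L: "L ** hcat H J = mat 1"
    using left_inv[of "hcat H J"] assms(2) by auto
  define LJ where "LJ = (\<chi> i c. L $ Inr i $ c)"
  have LJ: "LJ ** J = mat 1"
  proof -
    have "(LJ ** J) $ i $ j = (L ** hcat H J) $ Inr i $ Inr j" for i j
      by (simp add: LJ_def matrix_matrix_mult_def hcat_def)
    then show ?thesis using L by (simp add: vec_eq_iff mat_def)
  qed
  obtain Q :: "complex^'i^'b" where Q: "ctrans Q ** Q = mat 1" "J = Q ** (ctrans Q ** J)"
    using exists_Q[of J] assms(1) by auto
  define C where "C = ctrans Q ** J"
  define Ci where "Ci = LJ ** Q"
  have "Ci ** C = LJ ** (Q ** (ctrans Q ** J))" by (simp add: Ci_def C_def matrix_mul_assoc)
  then have CiC: "Ci ** C = mat 1" using LJ Q(2) by simp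
  then have CCi: "C ** Ci = mat 1" using matrix_left_right_inverse by blast
  define X where "X = Ci ** ctrans Q"
  have JX: "J ** X = Q ** ctrans Q"
  proof -
    have "J ** X = Q ** (C ** Ci) ** ctrans Q"
      using Q(2) by (metis C_def X_def matrix_mul_assoc)
    then show ?thesis using CCi by simp
  qed
  have XJ: "X ** J = mat 1"
    using CiC by (simp add: X_def C_def matrix_mul_assoc)
  have QQh: "ctrans (Q ** ctrans Q) = Q ** ctrans Q" by (simp add: ctrans_mult)
  have pen: "J ** X ** J = J \<and> X ** J ** X = X \<and> ctrans (J ** X) = J ** X \<and> ctrans (X ** J) = X ** J"
    using XJ JX QQh Q(2) by (simp add: matrix_mul_assoc[symmetric])
  have pinvJ: "pinv J = X"
    unfolding pinv_def
  proof (rule the_equality)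
    show "J ** X ** J = J \<and> X ** J ** X = X \<and> ctrans (J ** X) = J ** X \<and> ctrans (X ** J) = X ** J"
      by (rule pen)
  next
    fix X' assume "J ** X' ** J = J \<and> X' ** J ** X' = X' \<and> ctrans (J ** X') = J ** X' \<and> ctrans (X' ** J) = X' ** J"
    then show "X' = X" using pen pinv_unique[of J X' X] by blast
  qed
  have Phat: "mat 1 - J ** pinv J = mat 1 - Q ** ctrans Q" using pinvJ JX by simp
  have part1: "(mat 1 - J ** pinv J) \<in> grass_proj TYPE('i)"
    unfolding Phat grass_proj_def using Q(1) by blast
  have YHS: "Y - H ** S = J ** W" using assms(4) by simp
  have zero: "(mat 1 - J ** pinv J) ** (Y - H ** S) = 0"
  proof -
    have "(mat 1 - Q ** ctrans Q) ** (J ** W) = J ** W - Q ** (ctrans Q ** J) ** W"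
      by (simp add: matrix_diff_rdistrib matrix_mul_assoc)
    also have "\<dots> = 0" using Q(2) by simp
    finally show ?thesis using Phat YHS by simp
  qed
  have part2: "frob_sq (P ** (Y - H ** S')) > 0"
    if S': "S' \<in> mat_over qpsk" and P: "P \<in> grass_proj TYPE('i)"
      and ne: "(P, S') \<noteq> (mat 1 - J ** pinv J, S)" for S' P
  proof (rule ccontr)
    assume "\<not> frob_sq (P ** (Y - H ** S')) > 0"
    then have "frob_sq (P ** (Y - H ** S')) = 0" using frob_sq_nonneg[of "P ** (Y - H ** S')"] by linarith
    then have Z: "P ** (Y - H ** S') = 0" by (rule frob_sq_eq0)
    obtain Q' :: "complex^'i^'b" where Q': "ctrans Q' ** Q' = mat 1" "P = mat 1 - Q' ** ctrans Q'"
      using P unfolding grass_proj_def by blast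
    define N where "N = Y - H ** S'"
    have NQ: "N = Q' ** (ctrans Q' ** N)"
    proof -
      have "N - Q' ** (ctrans Q' ** N) = 0"
        using Z by (simp add: Q'(2) N_def matrix_diff_rdistrib matrix_mul_assoc)
      then show ?thesis by simp
    qed
    have NM: "N = hcat H J ** vcat (S - S') W"
      by (simp add: hcat_vcat N_def assms(4) matrix_diff_ldistrib)
    show False
    proof (cases "S' = S")
      case False
      have "vcat (S - S') W = L ** N" using NM L by (simp add: matrix_mul_assoc)
      also have "\<dots> = (L ** Q') ** (ctrans Q' ** N)" using NQ by (metis matrix_mul_assoc)
      finally have "rank (vcat (S - S') W) \<le> CARD('i)" using rank_factor by metis
      then have "eclipsed S W" unfolding eclipsed_def using S' False by blast
      then show False using assms(5) by simp
    next
      case True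
      then have Pne: "P \<noteq> mat 1 - Q ** ctrans Q" using ne Phat by simp
      have NJW: "N = J ** W" using True YHS N_def by simp
      have PJ: "P ** J = 0"
      proof (rule ccontr)
        assume "P ** J \<noteq> 0"
        then obtain r i0 where ri: "(P ** J) $ r $ i0 \<noteq> 0" by (metis vec_eq_iff zero_index)
        define z where "z = (P ** J) $ r"
        have "(\<Sum>i\<in>UNIV. z$i * W$i$d) = 0" for d
        proof -
          have "(\<Sum>i\<in>UNIV. z$i * W$i$d) = ((P ** J) ** W) $ r $ d"
            by (simp add: z_def matrix_matrix_mult_def)
          also have "\<dots> = (P ** N) $ r $ d" using NJW by (simp add: matrix_mul_assoc)
          also have "\<dots> = 0" using Z N_def by simp
          finally show ?thesis .
        qed
        then have "eclipsed S W" using ecl[OF assms(3), of z i0 W] ri z_def by blast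
        then show False using assms(5) by simp
      qed
      define P1 where "P1 = Q' ** ctrans Q'"
      define P2 where "P2 = Q ** ctrans Q"
      have P1J: "P1 ** J = J"
      proof -
        have "J - P1 ** J = 0" using PJ by (simp add: Q'(2) P1_def matrix_diff_rdistrib)
        then show ?thesis by simp
      qed
      define C' where "C' = ctrans Q' ** J"
      define Ci' where "Ci' = LJ ** Q'"
      have "Ci' ** C' = LJ ** (P1 ** J)" by (simp add: Ci'_def C'_def P1_def matrix_mul_assoc)
      then have "Ci' ** C' = mat 1" using LJ P1J by simp
      then have C'Ci': "C' ** Ci' = mat 1" using matrix_left_right_inverse by blast
      have Q'J: "Q' = J ** Ci'"
      proof -
        have "Q' = Q' ** (C' ** Ci')" using C'Ci' by simp
        also have "\<dots> = P1 ** J ** Ci'" by (simp add: P1_def C'_def matrix_mul_assoc)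
        finally show ?thesis using P1J by simp
      qed
      have P2Q': "P2 ** Q' = Q'"
      proof -
        have "P2 ** Q' = J ** X ** J ** Ci'" using JX Q'J by (simp add: P2_def matrix_mul_assoc)
        also have "\<dots> = J ** Ci'" using pen by simp
        finally show ?thesis using Q'J by simp
      qed
      have 21: "P2 ** P1 = P1" using P2Q' by (simp add: P1_def matrix_mul_assoc)
      have 12: "P1 ** P2 = P2" using P1J JX by (metis P2_def matrix_mul_assoc)
      have c1: "ctrans P1 = P1" by (simp add: P1_def ctrans_mult)
      have c2: "ctrans P2 = P2" by (simp add: P2_def ctrans_mult)
      have "P2 = ctrans (P1 ** P2)" using 12 c2 by simp
      also have "\<dots> = P2 ** P1" using c1 c2 by (simp add: ctrans_mult)
      finally have "P2 = P1" using 21 by simp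
      then show False using Pne Q'(2) P1_def P2_def by simp
    qed
  qed
  show ?thesis using part1 part2 zero by simp
qed


end
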